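(* There exists an integral domain $R$ with the U-FF property such that the polynomial ring $R[w]$ does not have the U-FF property.
   Context: An integral domain has the U-FF property if every nonzero element that is a unit or a finite product of irreducible elements has only finitely many factorizations into irreducibles, counted up to order and associates. *)

theory Defs
  imports "HOL-Algebra.Algebra"
begin

text \<open>Units have exactly the empty factorization.\<close>
definition factorizations :: "('a, 'b) ring_scheme \<Rightarrow> 'a \<Rightarrow> 'a list set" where
  "factorizations R a = {fs. set fs \<subseteq> carrier (mult_of R) \<and> wfactors (mult_of R) fs a}"

text \<open>U-FF: every nonzero element that is a unit or a finite product of irreducibles has only
  finitely many factorizations, counted up to order and associates.\<close>
definition U_FF :: "('a, 'b) ring_scheme \<Rightarrow> bool" where
  "U_FF R \<longleftrightarrow> (\<forall>a \<in> carrier (mult_of R). factorizations R a \<noteq> {} \<longrightarrow>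
      finite (factorizations R a // {(fs, gs). essentially_equal (mult_of R) fs gs}))"

end

theory Submission
  imports Defs "HOL-Algebra.Weak_Morphisms" "HOL-Library.Poly_Mapping" "HOL-Library.Z2" "HOL-Library.Countable"
begin

abbreviation lk where "lk \<equiv> Poly_Mapping.lookup"
abbreviation ks where "ks \<equiv> Poly_Mapping.keys"

type_synonym ex = "nat \<Rightarrow>\<^sub>0 rat"
type_synonym tp = "ex \<Rightarrow>\<^sub>0 bit"

definition Cone :: "ex set" where
  "Cone = {e. ks e \<subseteq> {0,1,2} \<and> 0 \<le> lk e 0 \<and> lk e 0 \<le> lk e 2
              \<and> 0 \<le> lk e 1 \<and> lk e 1 \<le> lk e 2}"

lemma Cone_add: "a \<in> Cone \<Longrightarrow> b \<in> Cone \<Longrightarrow> a + b \<in> Cone"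
  unfolding Cone_def using keys_add[of a b] by (auto simp: Poly_Mapping.lookup_add)

lemma Cone_zero: "0 \<in> Cone"
  unfolding Cone_def by auto

definition half :: "ex \<Rightarrow> ex" where "half e = Poly_Mapping.map (\<lambda>x. x/2) e"

lemma lookup_half: "lk (half e) k = lk e k / 2"
  unfolding half_def by (simp add: map.rep_eq when_def)

lemma keys_half: "ks (half e) = ks e"
  by (auto simp: in_keys_iff lookup_half)

lemma half_half: "half e + half e = e"
  by (rule poly_mapping_eqI) (subst Poly_Mapping.lookup_add, subst lookup_half, subst lookup_half, simp)

lemma Cone_half: "e \<in> Cone \<Longrightarrow> half e \<in> Cone"
  unfolding Cone_def by (auto simp: keys_half lookup_half)

lemma Cone_pointed: "a \<in> Cone \<Longrightarrow> - a \<in> Cone \<Longrightarrow> a = 0"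
  unfolding Cone_def
  apply (rule poly_mapping_eqI)
  by (auto simp: subset_iff in_keys_iff)


lemma lookup_mult_unique:
  fixes p q :: "('a::comm_monoid_add) \<Rightarrow>\<^sub>0 ('b::semiring_0)"
  assumes "\<And>a' b'. a' \<in> ks p \<Longrightarrow> b' \<in> ks q \<Longrightarrow> a' + b' = a + b \<Longrightarrow> a' = a \<and> b' = b"
  shows "lk (p * q) (a + b) = lk p a * lk q b"
proof -
  have fp: "finite {x. lk p x \<noteq> 0}" and fq: "finite {x. lk q x \<noteq> 0}"
    using finite_keys[of p] finite_keys[of q] by (simp_all add: in_keys_iff[symmetric])
  have "lk (p*q) (a+b) = prod_fun (lk p) (lk q) (a+b)" by (simp add: times_poly_mapping.rep_eq)
  also have "\<dots> = (\<Sum>(x,y). lk p x * lk q y when a + b = x + y)"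
    by (rule prod_fun_unfold_prod[OF fp fq])
  also have "\<dots> = (\<Sum>xy. (case xy of (x,y) \<Rightarrow> lk p x * lk q y) when xy = (a,b))"
  proof (rule Sum_any.cong)
    fix xy :: "'a \<times> 'a"
    obtain x y where xy: "xy = (x,y)" by (cases xy)
    show "(case xy of (x, y) \<Rightarrow> lk p x * lk q y when a + b = x + y) =
          ((case xy of (x, y) \<Rightarrow> lk p x * lk q y) when xy = (a, b))"
      using assms[of x y] unfolding xy by (cases "lk p x = 0"; cases "lk q y = 0") (auto simp: when_def in_keys_iff)
  qed
  also have "\<dots> = lk p a * lk q b" by simp
  finally show ?thesis .
qed

lemma sum_le_eq:
  fixes a b c d :: "'a::linordered_ab_group_add"
  assumes "a \<le> c" "b \<le> d" "a + b = c + d"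
  shows "a = c \<and> b = d"
proof -
  have "c + b \<le> a + b" using assms(2,3) by (simp add: add_left_mono)
  hence "c \<le> a" by simp
  moreover have "a + d \<le> a + b" using assms(1,3) by (simp add: add_right_mono)
  hence "d \<le> b" by simp
  ultimately show ?thesis using assms by auto
qed

lemma bit_eq_1: "(x::bit) \<noteq> 0 \<Longrightarrow> x = 1" by simp

lemma keys_one_single:
  fixes p :: "'a \<Rightarrow>\<^sub>0 bit"
  assumes "ks p = {a}"
  shows "p = Poly_Mapping.single a 1"
proof (rule poly_mapping_eqI)
  fix k
  show "lk p k = lk (Poly_Mapping.single a 1) k"
  proof (cases "k = a")
    case True
    then have "k \<in> ks p" using assms by simp
    then have "lk p k \<noteq> 0" using in_keys_iff[of k p] by blast
    then have "lk p k = 1" by (rule bit_eq_1)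
    then show ?thesis using True by simp
  next
    case False
    then have "k \<notin> ks p" using assms by simp
    then have "lk p k = 0" by (meson in_keys_iff)
    then show ?thesis using False by (simp add: lookup_single)
  qed
qed

lemma mono_div:
  fixes p q :: tp
  assumes pq: "p * q = Poly_Mapping.single e 1"
  shows "\<exists>a b. p = Poly_Mapping.single a 1 \<and> q = Poly_Mapping.single b 1 \<and> a + b = e"
proof -
  have s0: "Poly_Mapping.single e (1::bit) \<noteq> 0"
    by (metis lookup_single_eq lookup_zero zero_neq_one)
  have p0: "p \<noteq> 0" and q0: "q \<noteq> 0" using pq s0 by auto
  define F where "F = ks p"
  define G where "G = ks q"
  have fF: "finite F" "F \<noteq> {}" using p0 by (auto simp: F_def)
  have fG: "finite G" "G \<noteq> {}" using q0 by (auto simp: G_def)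
  define aM where "aM = Max F"
  define bM where "bM = Max G"
  define am where "am = Min F"
  define bm where "bm = Min G"
  have inF: "aM \<in> F" "am \<in> F" using fF by (auto simp: aM_def am_def)
  have inG: "bM \<in> G" "bm \<in> G" using fG by (auto simp: bM_def bm_def)
  have leF: "\<And>x. x \<in> F \<Longrightarrow> am \<le> x \<and> x \<le> aM" using fF by (auto simp: aM_def am_def)
  have leG: "\<And>x. x \<in> G \<Longrightarrow> bm \<le> x \<and> x \<le> bM" using fG by (auto simp: bM_def bm_def)
  have "lk (p*q) (aM + bM) = lk p aM * lk q bM"
  proof (rule lookup_mult_unique)
    fix a' b' assume a': "a' \<in> ks p" and b': "b' \<in> ks q" and s: "a' + b' = aM + bM"
    have "a' \<le> aM" "b' \<le> bM" using leF leG a' b' by (auto simp: F_def G_def)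
    then show "a' = aM \<and> b' = bM"
      using s sum_le_eq[where a=a' and b=b' and c=aM and d=bM] by simp
  qed
  also have "\<dots> = 1" using inF inG by (simp add: F_def G_def in_keys_iff)
  finally have "aM + bM \<in> ks (p*q)" by (simp add: in_keys_iff)
  hence e1: "aM + bM = e" using pq by simp
  have "lk (p*q) (am + bm) = lk p am * lk q bm"
  proof (rule lookup_mult_unique)
    fix a' b' assume a': "a' \<in> ks p" and b': "b' \<in> ks q" and s: "a' + b' = am + bm"
    have "am \<le> a'" "bm \<le> b'" using leF leG a' b' by (auto simp: F_def G_def)
    then show "a' = am \<and> b' = bm"
      using s sum_le_eq[where a=am and b=bm and c=a' and d=b'] by simp
  qed
  also have "\<dots> = 1" using inF inG by (simp add: F_def G_def in_keys_iff)
  finally have "am + bm \<in> ks (p*q)" by (simp add: in_keys_iff)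
  hence e2: "am + bm = e" using pq by simp
  have "am \<le> aM" "bm \<le> bM" using leF leG inF inG by auto
  hence eqa: "am = aM" and eqb: "bm = bM" using e1 e2
    using sum_le_eq[where a=am and b=bm and c=aM and d=bM] by simp_all
  have "F = {aM}" using leF inF eqa by fastforce
  moreover have "G = {bM}" using leG inG eqb by fastforce
  ultimately have "p = Poly_Mapping.single aM 1" "q = Poly_Mapping.single bM 1"
    by (simp_all add: keys_one_single F_def G_def)
  then show ?thesis using e1 by blast
qed


lemma tp_two: "(1::tp) + 1 = 0"
proof -
  have "(1::tp) + 1 = Poly_Mapping.single 0 (1 + 1)"
    by (simp only: single_add single_one)
  also have "(1::bit) + 1 = 0" by simp
  finally show ?thesis by simp
qed

lemma tp_double: "(x::tp) + x = 0"
proof -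
  have "x + x = (1 + 1) * x" by (simp add: distrib_right)
  also have "\<dots> = 0" by (simp only: tp_two mult_zero_left)
  finally show ?thesis .
qed

lemma tp_uminus: "- (x::tp) = x"
  using tp_double[of x] by (simp add: add_eq_0_iff)

lemma tp_sq_add: "((x::tp) + y) * (x + y) = x * x + y * y"
proof -
  have "(x + y) * (x + y) = x * x + y * y + (x * y + x * y)"
    by (simp add: algebra_simps)
  also have "x * y + x * y = 0" by (rule tp_double)
  finally show ?thesis by simp
qed

lemma tp_frob_sum:
  assumes "finite A"
  shows "(\<Sum>i\<in>A. f i) * (\<Sum>i\<in>A. f i) = (\<Sum>i\<in>A. (f i :: tp) * f i)"
  using assms by (induction A rule: finite_induct) (simp_all add: tp_sq_add)

lemma tp_sum_monos: "(\<Sum>e\<in>ks p. Poly_Mapping.single e (1::bit)) = p"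
proof (rule poly_mapping_eqI)
  fix k
  have "lk (\<Sum>e\<in>ks p. Poly_Mapping.single e (1::bit)) k = (\<Sum>e\<in>ks p. (if e = k then 1 else 0))"
    by (simp add: lookup_sum lookup_single when_def)
  also have "\<dots> = (if k \<in> ks p then 1 else 0)"
    by (simp add: sum.delta)
  also have "\<dots> = lk p k"
  proof (cases "k \<in> ks p")
    case True
    then have "lk p k \<noteq> 0" using in_keys_iff[of k p] by blast
    then have "lk p k = 1" by (rule bit_eq_1)
    then show ?thesis using True by simp
  next
    case False
    then have "lk p k = 0" by (meson in_keys_iff)
    then show ?thesis using False by simp
  qed
  finally show "lk (\<Sum>e\<in>ks p. Poly_Mapping.single e (1::bit)) k = lk p k" .
qed

definition sq :: "tp \<Rightarrow> tp" where
  "sq p = (\<Sum>e\<in>ks p. Poly_Mapping.single (half e) 1)"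

lemma sq_sq: "sq p * sq p = p"
proof -
  have "sq p * sq p = (\<Sum>e\<in>ks p. Poly_Mapping.single (half e) 1 * Poly_Mapping.single (half e) (1::bit))"
    unfolding sq_def by (rule tp_frob_sum) simp
  also have "\<dots> = (\<Sum>e\<in>ks p. Poly_Mapping.single e 1)"
    by (simp add: mult_single half_half)
  also have "\<dots> = p" by (rule tp_sum_monos)
  finally show ?thesis .
qed

lemma keys_sq: "ks (sq p) \<subseteq> half ` ks p"
  unfolding sq_def using keys_sum[of "\<lambda>e. Poly_Mapping.single (half e) (1::bit)" "ks p"]
  by auto

definition Rc :: "tp set" where "Rc = {p. ks p \<subseteq> Cone}"

lemma Rc_zero: "0 \<in> Rc" by (simp add: Rc_def)
lemma Rc_one: "1 \<in> Rc" by (simp add: Rc_def Cone_zero)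
lemma Rc_add: "p \<in> Rc \<Longrightarrow> q \<in> Rc \<Longrightarrow> p + q \<in> Rc"
  unfolding Rc_def using keys_add[of p q] by auto
lemma Rc_mult: "p \<in> Rc \<Longrightarrow> q \<in> Rc \<Longrightarrow> p * q \<in> Rc"
  unfolding Rc_def using keys_mult[of p q] Cone_add by blast
lemma Rc_sq: "p \<in> Rc \<Longrightarrow> sq p \<in> Rc"
  unfolding Rc_def using keys_sq[of p] Cone_half by blast
lemma Rc_single: "e \<in> Cone \<Longrightarrow> Poly_Mapping.single e (1::bit) \<in> Rc"
  unfolding Rc_def by simp

definition crd :: "ex \<Rightarrow> rat \<times> rat \<times> rat" where
  "crd e = (lk e 0, lk e 1, lk e 2)"

lemma inj_crd: "inj_on crd Cone"
proof (rule inj_onI)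
  fix a b assume a: "a \<in> Cone" and b: "b \<in> Cone" and ab: "crd a = crd b"
  show "a = b"
  proof (rule poly_mapping_eqI)
    fix k
    show "lk a k = lk b k"
    proof (cases "k \<in> {0,1,2}")
      case True then show ?thesis using ab by (auto simp: crd_def)
    next
      case False
      then have "k \<notin> ks a" "k \<notin> ks b" using a b by (auto simp: Cone_def)
      then have "lk a k = 0" "lk b k = 0" by (meson in_keys_iff)+
      then show ?thesis by simp
    qed
  qed
qed

definition enc :: "tp \<Rightarrow> nat set" where
  "enc p = (\<lambda>e. to_nat (crd e)) ` ks p"

lemma inj_enc: "inj_on enc Rc"
proof (rule inj_onI)
  fix p q assume p: "p \<in> Rc" and q: "q \<in> Rc" and pq: "enc p = enc q"
  have inj2: "inj_on (\<lambda>e. to_nat (crd e)) Cone"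
    using inj_crd by (simp add: inj_on_def)
  have kp: "ks p \<subseteq> Cone" and kq: "ks q \<subseteq> Cone" using p q by (auto simp: Rc_def)
  have keq: "ks p = ks q"
    using inj_on_image_eq_iff[OF inj2 kp kq] pq by (simp add: enc_def)
  show "p = q"
  proof (rule poly_mapping_eqI)
    fix k
    show "lk p k = lk q k"
    proof (cases "k \<in> ks p")
      case True
      then have "lk p k \<noteq> 0" "lk q k \<noteq> 0" using keq in_keys_iff by blast+
      then show ?thesis using bit_eq_1 by metis
    next
      case False
      then have "k \<notin> ks q" using keq by simp
      then have "lk p k = 0" "lk q k = 0" using False by (meson in_keys_iff)+
      then show ?thesis by simp
    qed
  qed
qed

definition R0 :: "tp ring" where
  "R0 = \<lparr>carrier = Rc, monoid.mult = (*), one = 1, ring.zero = 0, add = (+)\<rparr>"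

lemma domain_R0: "domain R0"
  unfolding R0_def
  apply unfold_locales
  apply (auto simp: Rc_zero Rc_one Rc_add Rc_mult algebra_simps Units_def)
  using tp_double by blast


definition RR :: "nat set ring" where "RR = image_ring enc R0"

lemma domain_RR: "domain RR"
  unfolding RR_def
  by (rule domain.inj_imp_image_ring_is_domain[OF domain_R0]) (simp add: R0_def inj_enc)


definition dec :: "nat set \<Rightarrow> tp" where "dec x = inv_into Rc enc x"

lemma carrier_RR: "carrier RR = enc ` Rc"
  by (simp add: RR_def image_ring_def image_group_def R0_def monoid.defs)
lemma mult_RR: "x \<otimes>\<^bsub>RR\<^esub> y = enc (dec x * dec y)"
  by (simp add: RR_def image_ring_def image_group_def R0_def monoid.defs dec_def)
lemma one_RR: "\<one>\<^bsub>RR\<^esub> = enc 1"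
  by (simp add: RR_def image_ring_def image_group_def R0_def monoid.defs)
lemma zero_RR: "\<zero>\<^bsub>RR\<^esub> = enc 0"
  by (simp add: RR_def image_ring_def image_group_def R0_def monoid.defs)

lemma dec_in: "x \<in> carrier RR \<Longrightarrow> dec x \<in> Rc"
  unfolding carrier_RR dec_def by (rule inv_into_into)
lemma enc_dec: "x \<in> carrier RR \<Longrightarrow> enc (dec x) = x"
  unfolding carrier_RR dec_def by (rule f_inv_into_f)
lemma dec_enc: "p \<in> Rc \<Longrightarrow> dec (enc p) = p"
  unfolding dec_def by (rule inv_into_f_f[OF inj_enc])
lemma enc_in: "p \<in> Rc \<Longrightarrow> enc p \<in> carrier RR"
  unfolding carrier_RR by simp

definition m :: "ex \<Rightarrow> nat set" where "m e = enc (Poly_Mapping.single e 1)"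

lemma m_carrier: "e \<in> Cone \<Longrightarrow> m e \<in> carrier RR"
  unfolding m_def by (rule enc_in[OF Rc_single])

lemma m_mult: "e \<in> Cone \<Longrightarrow> e' \<in> Cone \<Longrightarrow> m e \<otimes>\<^bsub>RR\<^esub> m e' = m (e + e')"
  unfolding mult_RR m_def by (simp add: dec_enc Rc_single mult_single)

lemma m_zero: "m 0 = \<one>\<^bsub>RR\<^esub>"
  unfolding m_def one_RR by (simp add: single_one)

lemma single_nz: "Poly_Mapping.single e (1::bit) \<noteq> 0"
  by (metis lookup_single_eq lookup_zero zero_neq_one)

lemma m_nonzero: "e \<in> Cone \<Longrightarrow> m e \<noteq> \<zero>\<^bsub>RR\<^esub>"
proof
  assume e: "e \<in> Cone" and z: "m e = \<zero>\<^bsub>RR\<^esub>"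
  have "enc (Poly_Mapping.single e 1) = enc 0" using z unfolding m_def zero_RR .
  hence "Poly_Mapping.single e (1::bit) = 0" by (rule inj_onD[OF inj_enc _ Rc_single[OF e] Rc_zero])
  thus False by (rule notE[OF single_nz[of e]])
qed

lemma single_inj1: "Poly_Mapping.single e (1::bit) = Poly_Mapping.single e' 1 \<Longrightarrow> e = e'"
proof -
  assume h: "Poly_Mapping.single e (1::bit) = Poly_Mapping.single e' 1"
  have "lk (Poly_Mapping.single e' (1::bit)) e = 1" unfolding h[symmetric] by simp
  thus "e = e'" by (simp add: lookup_single when_def split: if_splits)
qed

lemma m_inj: "e \<in> Cone \<Longrightarrow> e' \<in> Cone \<Longrightarrow> m e = m e' \<Longrightarrow> e = e'"
proof -
  assume e: "e \<in> Cone" and e': "e' \<in> Cone" and h: "m e = m e'"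
  have "enc (Poly_Mapping.single e 1) = enc (Poly_Mapping.single e' 1)" using h unfolding m_def .
  hence "Poly_Mapping.single e (1::bit) = Poly_Mapping.single e' 1"
    by (rule inj_onD[OF inj_enc _ Rc_single[OF e] Rc_single[OF e']])
  thus "e = e'" by (rule single_inj1)
qed

lemma m_div:
  assumes c: "c \<in> carrier RR" and d: "d \<in> carrier RR" and e: "e \<in> Cone"
    and cd: "c \<otimes>\<^bsub>RR\<^esub> d = m e"
  shows "\<exists>s. s \<in> Cone \<and> e - s \<in> Cone \<and> c = m s \<and> d = m (e - s)"
proof -
  have "enc (dec c * dec d) = enc (Poly_Mapping.single e 1)" using cd by (simp add: mult_RR m_def)
  hence "dec c * dec d = Poly_Mapping.single e 1"
    by (rule inj_onD[OF inj_enc _ Rc_mult[OF dec_in[OF c] dec_in[OF d]] Rc_single[OF e]])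
  then obtain a b where ab: "dec c = Poly_Mapping.single a 1" "dec d = Poly_Mapping.single b 1" "a + b = e"
    using mono_div by blast
  have aC: "a \<in> Cone" using dec_in[OF c] ab(1) by (simp add: Rc_def)
  have bC: "b \<in> Cone" using dec_in[OF d] ab(2) by (simp add: Rc_def)
  have "b = e - a" using ab(3) by (simp add: algebra_simps)
  moreover have "c = m a" using enc_dec[OF c] ab(1) by (simp add: m_def)
  moreover have "d = m b" using enc_dec[OF d] ab(2) by (simp add: m_def)
  ultimately show ?thesis using aC bC by blast
qed

lemma sqrt_RR: "x \<in> carrier RR \<Longrightarrow> \<exists>s\<in>carrier RR. s \<otimes>\<^bsub>RR\<^esub> s = x"
proof -
  assume x: "x \<in> carrier RR"
  let ?s = "enc (sq (dec x))"
  have "?s \<in> carrier RR" by (rule enc_in[OF Rc_sq[OF dec_in[OF x]]])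
  moreover have "?s \<otimes>\<^bsub>RR\<^esub> ?s = x"
    unfolding mult_RR by (simp add: dec_enc Rc_sq[OF dec_in[OF x]] sq_sq enc_dec[OF x])
  ultimately show ?thesis by blast
qed


interpretation RRd: domain RR by (rule domain_RR)

lemma no_irred_RR:
  assumes x: "x \<in> carrier (mult_of RR)"
  shows "\<not> irreducible (mult_of RR) x"
proof
  assume irr: "irreducible (mult_of RR) x"
  have xc: "x \<in> carrier RR - {\<zero>\<^bsub>RR\<^esub>}" using x by simp
  have ri: "ring_irreducible\<^bsub>RR\<^esub> x" by (rule RRd.ring_irreducibleI'[OF xc irr])
  obtain s where s: "s \<in> carrier RR" "s \<otimes>\<^bsub>RR\<^esub> s = x" using sqrt_RR xc by blast
  have "s \<in> Units RR \<or> s \<in> Units RR"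
    using RRd.ring_irreducibleE(5)[OF _ ri s(1) s(1)] xc s(2) by blast
  hence "x \<in> Units RR" using s(2) RRd.Units_m_closed by blast
  thus False using RRd.ring_irreducibleE(4)[OF _ ri] xc by blast
qed

lemma U_FF_RR: "U_FF RR"
  unfolding U_FF_def
proof (intro ballI impI)
  fix a assume a: "a \<in> carrier (mult_of RR)"
  let ?A = "factorizations RR a"
  have sub: "?A \<subseteq> {[]}"
  proof
    fix fs assume fs: "fs \<in> ?A"
    show "fs \<in> {[]}"
    proof (cases fs)
      case Nil then show ?thesis by simp
    next
      case (Cons y ys)
      have "y \<in> carrier (mult_of RR)" using fs Cons by (simp add: factorizations_def)
      moreover have "irreducible (mult_of RR) y"
        using fs Cons by (simp add: factorizations_def wfactors_def)
      ultimately show ?thesis using no_irred_RR by blast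
    qed
  qed
  hence "finite ?A" using finite_subset by blast
  thus "finite (?A // {(fs, gs). essentially_equal (mult_of RR) fs gs})"
    unfolding quotient_def by blast
qed


abbreviation PP where "PP \<equiv> UP RR"

lemma ud: "UP_domain RR" by (simp add: UP_domain_def domain_RR)

lemma ur: "UP_ring RR" by (simp add: UP_ring_def RRd.ring_axioms)

interpretation UPd: UP_ring RR PP
  using ur by simp_all

interpretation PPd: domain PP by (rule UP_domain.UP_domain[OF ud])

lemmas deg_mult_PP = UP_domain.deg_mult[OF ud]

definition cfree :: "nat set \<Rightarrow> nat set \<Rightarrow> bool" where
  "cfree a b \<longleftrightarrow> (\<forall>c\<in>carrier RR. \<forall>u\<in>carrier RR. \<forall>u'\<in>carrier RR.
      a = c \<otimes>\<^bsub>RR\<^esub> u \<longrightarrow> b = c \<otimes>\<^bsub>RR\<^esub> u' \<longrightarrow> c \<in> Units RR)"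

definition lin :: "nat set \<Rightarrow> nat set \<Rightarrow> (nat \<Rightarrow> nat set)" where
  "lin a b = monom PP a 1 \<oplus>\<^bsub>PP\<^esub> monom PP b 0"

lemma lin_carrier: "a \<in> carrier RR \<Longrightarrow> b \<in> carrier RR \<Longrightarrow> lin a b \<in> carrier PP"
  unfolding lin_def by simp

lemma coeff_lin:
  assumes "a \<in> carrier RR" "b \<in> carrier RR"
  shows "coeff PP (lin a b) n = (if n = 1 then a else if n = 0 then b else \<zero>\<^bsub>RR\<^esub>)"
  using assms unfolding lin_def by simp

lemma deg_lin:
  assumes "a \<in> carrier RR" "b \<in> carrier RR" "a \<noteq> \<zero>\<^bsub>RR\<^esub>"
  shows "deg RR (lin a b) = 1"
proof (rule antisym)
  show "deg RR (lin a b) \<le> 1"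
    by (rule UPd.deg_aboveI) (use assms in \<open>simp_all add: coeff_lin lin_carrier\<close>)
  show "1 \<le> deg RR (lin a b)"
    by (rule UPd.deg_belowI) (use assms in \<open>simp_all add: coeff_lin lin_carrier\<close>)
qed

lemma lin_nonzero:
  assumes "a \<in> carrier RR" "b \<in> carrier RR" "a \<noteq> \<zero>\<^bsub>RR\<^esub>"
  shows "lin a b \<noteq> \<zero>\<^bsub>PP\<^esub>"
proof
  assume "lin a b = \<zero>\<^bsub>PP\<^esub>"
  hence "coeff PP (lin a b) 1 = \<zero>\<^bsub>RR\<^esub>" by simp
  thus False using assms by (simp add: coeff_lin)
qed

lemma units_deg0:
  assumes "p \<in> Units PP" shows "deg RR p = 0"
proof -
  obtain q where q: "q \<in> carrier PP" "p \<otimes>\<^bsub>PP\<^esub> q = \<one>\<^bsub>PP\<^esub>" and p: "p \<in> carrier PP"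
    using assms unfolding Units_def by blast
  have "p \<noteq> \<zero>\<^bsub>PP\<^esub>" "q \<noteq> \<zero>\<^bsub>PP\<^esub>" using q p PPd.one_not_zero by auto
  hence "deg RR (p \<otimes>\<^bsub>PP\<^esub> q) = deg RR p + deg RR q" using q p by (intro deg_mult_PP) 
  thus ?thesis using q(2) by simp
qed

lemma const_unit:
  assumes "c \<in> Units RR" shows "monom PP c 0 \<in> Units PP"
proof -
  have c: "c \<in> carrier RR" "inv\<^bsub>RR\<^esub> c \<in> carrier RR" using assms by auto
  have "monom PP c 0 \<otimes>\<^bsub>PP\<^esub> monom PP (inv\<^bsub>RR\<^esub> c) 0 = \<one>\<^bsub>PP\<^esub>"
    using UPd.monom_mult[OF c, of 0 0, symmetric] assms by simp
  moreover have "monom PP (inv\<^bsub>RR\<^esub> c) 0 \<otimes>\<^bsub>PP\<^esub> monom PP c 0 = \<one>\<^bsub>PP\<^esub>"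
    using UPd.monom_mult[OF c(2) c(1), of 0 0, symmetric] assms by simp
  ultimately show ?thesis unfolding Units_def using c by auto
qed

lemma lin_split_const:
  assumes a: "a \<in> carrier RR" and b: "b \<in> carrier RR"
    and cf: "cfree a b"
    and q: "q \<in> carrier PP" and r: "r \<in> carrier PP" and dq: "deg RR q = 0"
    and eq: "lin a b = q \<otimes>\<^bsub>PP\<^esub> r"
  shows "q \<in> Units PP"
proof -
  define c where "c = coeff PP q 0"
  have c: "c \<in> carrier RR" using q by (simp add: c_def)
  have qm: "q = monom PP c 0" unfolding c_def by (rule UPd.deg_zero_impl_monom[OF q dq])
  have "coeff PP (lin a b) (1 + 0) = c \<otimes>\<^bsub>RR\<^esub> coeff PP r 1"
    unfolding eq qm by (rule UPd.coeff_monom_mult[OF c r])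
  hence e1: "a = c \<otimes>\<^bsub>RR\<^esub> coeff PP r 1" using a b by (simp add: coeff_lin)
  have "coeff PP (lin a b) (0 + 0) = c \<otimes>\<^bsub>RR\<^esub> coeff PP r 0"
    unfolding eq qm by (rule UPd.coeff_monom_mult[OF c r])
  hence e0: "b = c \<otimes>\<^bsub>RR\<^esub> coeff PP r 0" using a b by (simp add: coeff_lin)
  have r1: "coeff PP r 1 \<in> carrier RR" and r0: "coeff PP r 0 \<in> carrier RR"
    using r by simp_all
  have "c \<in> Units RR" using cf c r1 r0 e1 e0 unfolding cfree_def by blast
  thus ?thesis unfolding qm by (rule const_unit)
qed

lemma lin_irred:
  assumes a: "a \<in> carrier RR" and b: "b \<in> carrier RR" and a0: "a \<noteq> \<zero>\<^bsub>RR\<^esub>"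
    and cf: "cfree a b"
  shows "irreducible (mult_of PP) (lin a b)"
proof -
  have lc: "lin a b \<in> carrier PP - {\<zero>\<^bsub>PP\<^esub>}" using lin_carrier[OF a b] lin_nonzero[OF a b a0] by simp
  have nu: "lin a b \<notin> Units PP" using units_deg0 deg_lin[OF a b a0] by force
  have "ring_irreducible\<^bsub>PP\<^esub> (lin a b)"
  proof (rule PPd.ring_irreducibleI[OF lc nu])
    fix q r assume q: "q \<in> carrier PP" and r: "r \<in> carrier PP" and eq: "lin a b = q \<otimes>\<^bsub>PP\<^esub> r"
    have "q \<noteq> \<zero>\<^bsub>PP\<^esub>" "r \<noteq> \<zero>\<^bsub>PP\<^esub>" using eq lc q r by auto
    hence "deg RR (q \<otimes>\<^bsub>PP\<^esub> r) = deg RR q + deg RR r" using q r by (intro deg_mult_PP)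
    hence "deg RR q + deg RR r = 1" using eq deg_lin[OF a b a0] by simp
    hence "deg RR q = 0 \<or> deg RR r = 0" by arith
    thus "q \<in> Units PP \<or> r \<in> Units PP"
    proof
      assume "deg RR q = 0"
      thus ?thesis using lin_split_const[OF a b cf q r _ eq] by blast
    next
      assume "deg RR r = 0"
      moreover have "lin a b = r \<otimes>\<^bsub>PP\<^esub> q" using eq q r PPd.m_comm by simp
      ultimately show ?thesis using lin_split_const[OF a b cf r q] by blast
    qed
  qed
  thus ?thesis using PPd.ring_irreducibleE(3) lc by blast
qed


lemma lin_divides_coeff:
  assumes a: "a \<in> carrier RR" and b: "b \<in> carrier RR" and a0: "a \<noteq> \<zero>\<^bsub>RR\<^esub>"
    and a': "a' \<in> carrier RR" and b': "b' \<in> carrier RR" and a0': "a' \<noteq> \<zero>\<^bsub>RR\<^esub>"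
    and dv: "lin a b divides\<^bsub>mult_of PP\<^esub> lin a' b'"
  shows "\<exists>c\<in>carrier RR. a' = c \<otimes>\<^bsub>RR\<^esub> a"
proof -
  obtain k where k: "k \<in> carrier PP" "k \<noteq> \<zero>\<^bsub>PP\<^esub>" and eq: "lin a' b' = lin a b \<otimes>\<^bsub>PP\<^esub> k"
    using dv unfolding factor_def by auto
  have "deg RR (lin a b \<otimes>\<^bsub>PP\<^esub> k) = deg RR (lin a b) + deg RR k"
    using k lin_carrier[OF a b] lin_nonzero[OF a b a0] by (intro deg_mult_PP)
  hence dk: "deg RR k = 0" using eq deg_lin[OF a b a0] deg_lin[OF a' b' a0'] by simp
  define c where "c = coeff PP k 0"
  have c: "c \<in> carrier RR" using k by (simp add: c_def)
  have km: "k = monom PP c 0" unfolding c_def by (rule UPd.deg_zero_impl_monom[OF k(1) dk])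
  have eq2: "lin a' b' = monom PP c 0 \<otimes>\<^bsub>PP\<^esub> lin a b"
    using eq k(1) lin_carrier[OF a b] PPd.m_comm km by simp
  have "coeff PP (lin a' b') (1 + 0) = c \<otimes>\<^bsub>RR\<^esub> coeff PP (lin a b) 1"
    unfolding eq2 by (rule UPd.coeff_monom_mult[OF c lin_carrier[OF a b]])
  hence "a' = c \<otimes>\<^bsub>RR\<^esub> a" using a b a' b' by (simp add: coeff_lin)
  thus ?thesis using c by blast
qed

lemma lin_assoc_m:
  assumes x: "x \<in> Cone" and x': "x' \<in> Cone" and b: "b \<in> carrier RR" and b': "b' \<in> carrier RR"
    and as: "lin (m x) b \<sim>\<^bsub>mult_of PP\<^esub> lin (m x') b'"
  shows "x = x'"
proof -
  have d1: "lin (m x) b divides\<^bsub>mult_of PP\<^esub> lin (m x') b'"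
   and d2: "lin (m x') b' divides\<^bsub>mult_of PP\<^esub> lin (m x) b"
    using as unfolding associated_def by auto
  have step: "y' - y \<in> Cone" if y: "y \<in> Cone" and y': "y' \<in> Cone" and bb: "bb \<in> carrier RR"
     and bb': "bb' \<in> carrier RR" and d: "lin (m y) bb divides\<^bsub>mult_of PP\<^esub> lin (m y') bb'" for y y' bb bb'
  proof -
    obtain c where c: "c \<in> carrier RR" and e: "m y' = c \<otimes>\<^bsub>RR\<^esub> m y"
      using lin_divides_coeff[OF m_carrier[OF y] bb m_nonzero[OF y] m_carrier[OF y'] bb' m_nonzero[OF y'] d]
      by blast
    obtain s where s: "s \<in> Cone" "y' - s \<in> Cone" "c = m s" "m y = m (y' - s)"
      using m_div[OF c m_carrier[OF y] y' e[symmetric]] by blast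
    have "y = y' - s" by (rule m_inj[OF y s(2) s(4)])
    hence "y' - y = s" by (simp add: algebra_simps)
    thus ?thesis using s(1) by simp
  qed
  have "x' - x \<in> Cone" by (rule step[OF x x' b b' d1])
  moreover have "x - x' \<in> Cone" by (rule step[OF x' x b' b d2])
  hence "- (x' - x) \<in> Cone" by simp
  ultimately have "x' - x = 0" by (rule Cone_pointed)
  thus ?thesis by simp
qed

lemma cfree_m:
  assumes x: "x \<in> Cone" and y: "y \<in> Cone"
    and h: "\<And>s. s \<in> Cone \<Longrightarrow> x - s \<in> Cone \<Longrightarrow> y - s \<in> Cone \<Longrightarrow> s = 0"
  shows "cfree (m x) (m y)"
  unfolding cfree_def
proof (intro ballI impI)
  fix c u u' assume c: "c \<in> carrier RR" and u: "u \<in> carrier RR" and u': "u' \<in> carrier RR"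
    and e1: "m x = c \<otimes>\<^bsub>RR\<^esub> u" and e2: "m y = c \<otimes>\<^bsub>RR\<^esub> u'"
  obtain s where s: "s \<in> Cone" "x - s \<in> Cone" "c = m s"
    using m_div[OF c u x e1[symmetric]] by blast
  obtain s' where s': "s' \<in> Cone" "y - s' \<in> Cone" "c = m s'"
    using m_div[OF c u' y e2[symmetric]] by blast
  have "s = s'" using m_inj[OF s(1) s'(1)] s(3) s'(3) by simp
  hence "s = 0" using h s s' by simp
  hence "c = \<one>\<^bsub>RR\<^esub>" using s(3) m_zero by simp
  thus "c \<in> Units RR" by simp
qed


definition v :: "rat \<Rightarrow> rat \<Rightarrow> rat \<Rightarrow> ex" where
  "v a b c = Poly_Mapping.single 0 a + Poly_Mapping.single 1 b + Poly_Mapping.single 2 c"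

lemma lk_v: "lk (v a b c) k = (if k = 0 then a else if k = 1 then b else if k = 2 then c else 0)"
  by (simp add: v_def Poly_Mapping.lookup_add lookup_single when_def)

lemma keys_v: "ks (v a b c) \<subseteq> {0,1,2}"
proof
  fix k assume "k \<in> ks (v a b c)"
  hence "lk (v a b c) k \<noteq> 0" by (meson in_keys_iff)
  thus "k \<in> {0,1,2}" by (simp add: lk_v split: if_splits)
qed

lemma v_Cone: "0 \<le> a \<Longrightarrow> a \<le> c \<Longrightarrow> 0 \<le> b \<Longrightarrow> b \<le> c \<Longrightarrow> v a b c \<in> Cone"
  unfolding Cone_def using keys_v by (simp add: lk_v)

lemma v_add: "v a b c + v a2 b2 c2 = v (a + a2) (b + b2) (c + c2)"
  by (rule poly_mapping_eqI) (simp add: Poly_Mapping.lookup_add lk_v)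

lemma v_inj: "v a b c = v a2 b2 c2 \<Longrightarrow> a = a2 \<and> b = b2 \<and> c = c2"
proof -
  assume h: "v a b c = v a2 b2 c2"
  have "lk (v a b c) 0 = lk (v a2 b2 c2) 0" "lk (v a b c) 1 = lk (v a2 b2 c2) 1"
       "lk (v a b c) 2 = lk (v a2 b2 c2) 2" using h by simp_all
  thus ?thesis by (simp add: lk_v)
qed

lemma Cone_zero_crit:
  assumes s: "s \<in> Cone" and s2: "lk s 2 = 0" shows "s = 0"
proof (rule poly_mapping_eqI)
  fix k
  have c: "ks s \<subseteq> {0,1,2}" "0 \<le> lk s 0" "lk s 0 \<le> lk s 2" "0 \<le> lk s 1" "lk s 1 \<le> lk s 2"
    using s by (simp_all add: Cone_def)
  show "lk s k = lk 0 k"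
  proof (cases "k \<in> {0,1,2}")
    case True thus ?thesis using c s2 by auto
  next
    case False
    hence "k \<notin> ks s" using c(1) by blast
    hence "lk s k = 0" by (meson in_keys_iff)
    thus ?thesis by simp
  qed
qed

lemma Cone_diff_lk:
  assumes "x - s \<in> Cone"
  shows "0 \<le> lk x 0 - lk s 0" "lk x 0 - lk s 0 \<le> lk x 2 - lk s 2"
        "0 \<le> lk x 1 - lk s 1" "lk x 1 - lk s 1 \<le> lk x 2 - lk s 2"
  using assms by (simp_all add: Cone_def lookup_minus)

lemma Cone_lk:
  assumes "s \<in> Cone"
  shows "0 \<le> lk s 0" "lk s 0 \<le> lk s 2" "0 \<le> lk s 1" "lk s 1 \<le> lk s 2"
  using assms by (simp_all add: Cone_def)

definition gB :: "rat \<Rightarrow> nat \<Rightarrow> nat set" where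
  "gB B = lin (m (v 0 B 1)) (m (v 1 B 1))"
definition hB :: "rat \<Rightarrow> nat \<Rightarrow> nat set" where
  "hB B = lin (m (v 1 (1-B) 1)) (m (v 0 (1-B) 1))"

definition SB :: "rat set" where "SB = {B. 0 \<le> B \<and> B \<le> 1}"

lemma SB_vecs:
  assumes "B \<in> SB"
  shows "v 0 B 1 \<in> Cone" "v 1 B 1 \<in> Cone" "v 1 (1-B) 1 \<in> Cone" "v 0 (1-B) 1 \<in> Cone"
  using assms by (auto simp: SB_def intro!: v_Cone)

lemma gB_irred:
  assumes B: "B \<in> SB" shows "irreducible (mult_of PP) (gB B)"
  unfolding gB_def
proof (rule lin_irred[OF m_carrier m_carrier m_nonzero])
  show "v 0 B 1 \<in> Cone" "v 1 B 1 \<in> Cone" "v 0 B 1 \<in> Cone" using SB_vecs[OF B] by simp_all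
  show "cfree (m (v 0 B 1)) (m (v 1 B 1))"
  proof (rule cfree_m)
    show "v 0 B 1 \<in> Cone" "v 1 B 1 \<in> Cone" using SB_vecs[OF B] by simp_all
    fix s assume s: "s \<in> Cone" and d1: "v 0 B 1 - s \<in> Cone" and d2: "v 1 B 1 - s \<in> Cone"
    have "lk s 2 = 0"
      using Cone_lk[OF s] Cone_diff_lk[OF d1] Cone_diff_lk[OF d2] by (simp add: lk_v)
    thus "s = 0" by (rule Cone_zero_crit[OF s])
  qed
qed

lemma hB_irred:
  assumes B: "B \<in> SB" shows "irreducible (mult_of PP) (hB B)"
  unfolding hB_def
proof (rule lin_irred[OF m_carrier m_carrier m_nonzero])
  show "v 1 (1-B) 1 \<in> Cone" "v 0 (1-B) 1 \<in> Cone" "v 1 (1-B) 1 \<in> Cone" using SB_vecs[OF B] by simp_all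
  show "cfree (m (v 1 (1-B) 1)) (m (v 0 (1-B) 1))"
  proof (rule cfree_m)
    show "v 1 (1-B) 1 \<in> Cone" "v 0 (1-B) 1 \<in> Cone" using SB_vecs[OF B] by simp_all
    fix s assume s: "s \<in> Cone" and d1: "v 1 (1-B) 1 - s \<in> Cone" and d2: "v 0 (1-B) 1 - s \<in> Cone"
    have "lk s 2 = 0"
      using Cone_lk[OF s] Cone_diff_lk[OF d1] Cone_diff_lk[OF d2] by (simp add: lk_v)
    thus "s = 0" by (rule Cone_zero_crit[OF s])
  qed
qed

lemma lin_mult:
  assumes a: "a \<in> carrier RR" and b: "b \<in> carrier RR" and c: "c \<in> carrier RR" and d: "d \<in> carrier RR"
  shows "lin a b \<otimes>\<^bsub>PP\<^esub> lin c d =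
    monom PP (a \<otimes>\<^bsub>RR\<^esub> c) 2 \<oplus>\<^bsub>PP\<^esub> monom PP (a \<otimes>\<^bsub>RR\<^esub> d) 1 \<oplus>\<^bsub>PP\<^esub>
    monom PP (b \<otimes>\<^bsub>RR\<^esub> c) 1 \<oplus>\<^bsub>PP\<^esub> monom PP (b \<otimes>\<^bsub>RR\<^esub> d) 0"
proof -
  let ?A = "monom PP a 1" and ?B = "monom PP b 0" and ?C = "monom PP c 1" and ?D = "monom PP d 0"
  have cl: "?A \<in> carrier PP" "?B \<in> carrier PP" "?C \<in> carrier PP" "?D \<in> carrier PP"
    using a b c d by simp_all
  have "lin a b \<otimes>\<^bsub>PP\<^esub> lin c d = ?A \<otimes>\<^bsub>PP\<^esub> ?C \<oplus>\<^bsub>PP\<^esub> ?A \<otimes>\<^bsub>PP\<^esub> ?D \<oplus>\<^bsub>PP\<^esub>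
      ?B \<otimes>\<^bsub>PP\<^esub> ?C \<oplus>\<^bsub>PP\<^esub> ?B \<otimes>\<^bsub>PP\<^esub> ?D"
    unfolding lin_def using cl
    by (simp add: UPd.UP_l_distr UPd.UP_r_distr UPd.UP_a_assoc UPd.P.a_lcomm)
  also have "?A \<otimes>\<^bsub>PP\<^esub> ?C = monom PP (a \<otimes>\<^bsub>RR\<^esub> c) 2"
    using UPd.monom_mult[OF a c, of 1 1] by (simp add: numeral_2_eq_2)
  also have "?A \<otimes>\<^bsub>PP\<^esub> ?D = monom PP (a \<otimes>\<^bsub>RR\<^esub> d) 1"
    using UPd.monom_mult[OF a d, of 1 0] by simp
  also have "?B \<otimes>\<^bsub>PP\<^esub> ?C = monom PP (b \<otimes>\<^bsub>RR\<^esub> c) 1"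
    using UPd.monom_mult[OF b c, of 0 1] by simp
  also have "?B \<otimes>\<^bsub>PP\<^esub> ?D = monom PP (b \<otimes>\<^bsub>RR\<^esub> d) 0"
    using UPd.monom_mult[OF b d, of 0 0] by simp
  finally show ?thesis .
qed

definition FF :: "nat \<Rightarrow> nat set" where
  "FF = monom PP (m (v 1 1 2)) 2 \<oplus>\<^bsub>PP\<^esub> monom PP (m (v 0 1 2)) 1 \<oplus>\<^bsub>PP\<^esub>
    monom PP (m (v 2 1 2)) 1 \<oplus>\<^bsub>PP\<^esub> monom PP (m (v 1 1 2)) 0"

lemma gh_prod: assumes B: "B \<in> SB" shows "gB B \<otimes>\<^bsub>PP\<^esub> hB B = FF"
proof -
  note V = SB_vecs[OF B]
  show ?thesis
    unfolding gB_def hB_def FF_def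
    by (simp add: lin_mult m_carrier V m_mult v_add)
qed


lemma gB_carrier: "B \<in> SB \<Longrightarrow> gB B \<in> carrier (mult_of PP)"
  unfolding gB_def using SB_vecs[of B]
  by (simp add: lin_carrier m_carrier lin_nonzero m_nonzero)

lemma hB_carrier: "B \<in> SB \<Longrightarrow> hB B \<in> carrier (mult_of PP)"
  unfolding hB_def using SB_vecs[of B]
  by (simp add: lin_carrier m_carrier lin_nonzero m_nonzero)

lemma zero_SB: "0 \<in> SB" by (simp add: SB_def)

lemma FF_carrier: "FF \<in> carrier (mult_of PP)"
proof -
  have g: "gB 0 \<in> carrier PP" "gB 0 \<noteq> \<zero>\<^bsub>PP\<^esub>" and h: "hB 0 \<in> carrier PP" "hB 0 \<noteq> \<zero>\<^bsub>PP\<^esub>"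
    using gB_carrier[OF zero_SB] hB_carrier[OF zero_SB] by auto
  have "gB 0 \<otimes>\<^bsub>PP\<^esub> hB 0 \<noteq> \<zero>\<^bsub>PP\<^esub>" using PPd.integral[OF _ g(1) h(1)] g(2) h(2) by blast
  moreover have "gB 0 \<otimes>\<^bsub>PP\<^esub> hB 0 \<in> carrier PP" using g h by simp
  ultimately show ?thesis using gh_prod[OF zero_SB] by simp
qed

lemma assoc_refl_PP: "x \<in> carrier (mult_of PP) \<Longrightarrow> x \<sim>\<^bsub>mult_of PP\<^esub> x"
proof -
  assume x: "x \<in> carrier (mult_of PP)"
  have "\<one>\<^bsub>PP\<^esub> \<in> carrier (mult_of PP)" using PPd.one_not_zero by simp
  moreover have "x = x \<otimes>\<^bsub>mult_of PP\<^esub> \<one>\<^bsub>PP\<^esub>" using x by simp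
  ultimately show ?thesis unfolding associated_def factor_def by blast
qed

lemma fact_in: assumes B: "B \<in> SB" shows "[gB B, hB B] \<in> factorizations PP FF"
proof -
  have "foldr (\<otimes>\<^bsub>mult_of PP\<^esub>) [gB B, hB B] \<one>\<^bsub>mult_of PP\<^esub> = FF"
    using gB_carrier[OF B] hB_carrier[OF B] gh_prod[OF B] by simp
  thus ?thesis
    unfolding factorizations_def wfactors_def
    using gB_carrier[OF B] hB_carrier[OF B] gB_irred[OF B] hB_irred[OF B] assoc_refl_PP[OF FF_carrier]
    by simp
qed

lemma ee_inj:
  assumes B: "B \<in> SB" and B': "B' \<in> SB"
    and ee: "essentially_equal (mult_of PP) [gB B, hB B] [gB B', hB B']"
  shows "B = B'"
proof -
  obtain fs where p: "mset [gB B, hB B] = mset fs" and la: "list_all2 (associated (mult_of PP)) fs [gB B', hB B']"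
    using ee unfolding essentially_equal_def by blast
  obtain p1 p2 where fs: "fs = [p1, p2]" and a1: "p1 \<sim>\<^bsub>mult_of PP\<^esub> gB B'"
    using la by (auto simp: list_all2_Cons2)
  have "p1 \<in> set [gB B, hB B]" using p fs by (metis list.set_intros(1) mset_eq_setD)
  hence "p1 = gB B \<or> p1 = hB B" by simp
  thus ?thesis
  proof
    assume "p1 = gB B"
    hence "lin (m (v 0 B 1)) (m (v 1 B 1)) \<sim>\<^bsub>mult_of PP\<^esub> lin (m (v 0 B' 1)) (m (v 1 B' 1))"
      using a1 by (simp add: gB_def)
    hence "v 0 B 1 = v 0 B' 1"
      using SB_vecs[OF B] SB_vecs[OF B'] by (intro lin_assoc_m) (simp_all add: m_carrier)
    thus ?thesis using v_inj by blast
  next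
    assume "p1 = hB B"
    hence "lin (m (v 1 (1-B) 1)) (m (v 0 (1-B) 1)) \<sim>\<^bsub>mult_of PP\<^esub> lin (m (v 0 B' 1)) (m (v 1 B' 1))"
      using a1 by (simp add: gB_def hB_def)
    hence "v 1 (1-B) 1 = v 0 B' 1"
      using SB_vecs[OF B] SB_vecs[OF B'] by (intro lin_assoc_m) (simp_all add: m_carrier)
    hence "(1::rat) = 0" using v_inj by blast
    thus ?thesis by simp
  qed
qed

lemma infinite_SB: "infinite SB"
proof
  assume fin: "finite SB"
  define f :: "nat \<Rightarrow> rat" where "f n = 1 / (of_nat n + 1)" for n
  have "range f \<subseteq> SB" by (auto simp: f_def SB_def)
  hence "finite (range f)" using fin finite_subset by blast
  moreover have "inj f" unfolding f_def by (rule injI) (simp add: field_simps)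
  ultimately have "finite (UNIV :: nat set)" using finite_imageD by blast
  thus False by simp
qed

lemma not_U_FF_PP: "\<not> U_FF PP"
proof
  assume H: "U_FF PP"
  let ?A = "factorizations PP FF"
  let ?r = "{(fs, gs). essentially_equal (mult_of PP) fs gs}"
  have ne: "?A \<noteq> {}" using fact_in[OF zero_SB] by blast
  have fin: "finite (?A // ?r)" using H FF_carrier ne unfolding U_FF_def by blast
  define phi where "phi B = ?r `` {[gB B, hB B]}" for B
  have sub: "phi ` SB \<subseteq> ?A // ?r"
  proof (rule image_subsetI)
    fix B assume "B \<in> SB"
    thus "phi B \<in> ?A // ?r" unfolding phi_def by (rule quotientI[OF fact_in])
  qed
  have inj: "inj_on phi SB"
  proof (rule inj_onI)
    fix B B' assume B: "B \<in> SB" and B': "B' \<in> SB" and e: "phi B = phi B'"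
    have "list_all2 (associated (mult_of PP)) [gB B', hB B'] [gB B', hB B']"
      using assoc_refl_PP gB_carrier[OF B'] hB_carrier[OF B'] by simp
    hence "essentially_equal (mult_of PP) [gB B', hB B'] [gB B', hB B']"
      unfolding essentially_equal_def by blast
    hence "[gB B', hB B'] \<in> phi B'" unfolding phi_def by simp
    hence "[gB B', hB B'] \<in> phi B" using e by simp
    hence "essentially_equal (mult_of PP) [gB B, hB B] [gB B', hB B']" unfolding phi_def by simp
    thus "B = B'" by (rule ee_inj[OF B B'])
  qed
  have "finite (phi ` SB)" using fin sub finite_subset by blast
  hence "finite SB" using inj finite_imageD by blast
  thus False using infinite_SB by simp
qed

theorem mainTheorem13:
  shows "\<exists>R :: nat set ring. domain R \<and> U_FF R \<and> \<not> U_FF (UP R)"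
  using domain_RR U_FF_RR not_U_FF_PP by blast

end
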